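(* In the 3-body problem in ${\bf S}^2$ with equal masses $m_1=m_2=m_3=m$, for every $m>0$ and every $z\in(-1/2,0)\cup(0,1)$ there exist $\omega>0$ and $\omega<0$ such that ${\bf q}_1(t)=(0,0,1)$, ${\bf q}_2(t)=(r\cos\omega t, r\sin\omega t, z)$, ${\bf q}_3(t)=(-r\cos\omega t,-r\sin\omega t,z)$, with $r=(1-z^2)^{1/2}$, is a solution of the equations of motion (an elliptic relative equilibrium); the condition on $\omega$ is $\frac{4z+|z|^{-1}}{4z^2(1-z^2)^{3/2}}=\frac{\omega^2}{m}$.
   Context: The $n$-body problem in ${\bf S}^2$: bodies of masses $m_1,\dots,m_n>0$ have positions ${\bf q}_i=(x_i,y_i,z_i)\in\mathbb R^3$ on the unit sphere ${\bf S}^2=\{{\bf q}:{\bf q}\cdot{\bf q}=1\}$ ($\cdot$ the Euclidean inner product), and satisfy $$\ddot{\bf q}_i=\sum_{j\ne i}\frac{m_j[{\bf q}_j-({\bf q}_i\cdot{\bf q}_j){\bf q}_i]}{[1-({\bf q}_i\cdot{\bf q}_j)^2]^{3/2}}-(\dot{\bf q}_i\cdot\dot{\bf q}_i){\bf q}_i,\qquad {\bf q}_i\cdot{\bf q}_i=1,\ \ {\bf q}_i\cdot\dot{\bf q}_i=0,$$ $i=1,\dots,n$, defined only for configurations with $({\bf q}_i\cdot{\bf q}_j)^2\ne 1$ for all $i\ne j$. *)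

theory Defs
  imports "HOL-Analysis.Analysis"
begin

text \<open>Bodies are indexed 0,...,n-1. Positions q i t in R^3 (type real^3).\<close>
definition S2_accel :: "nat \<Rightarrow> (nat \<Rightarrow> real) \<Rightarrow> (nat \<Rightarrow> real^3) \<Rightarrow> (nat \<Rightarrow> real^3) \<Rightarrow> nat \<Rightarrow> real^3" where
  "S2_accel n m q v i =
     (\<Sum>j\<in>{..<n} - {i}. (m j / (1 - (q i \<bullet> q j)\<^sup>2) powr (3/2)) *\<^sub>R (q j - (q i \<bullet> q j) *\<^sub>R q i))
     - (v i \<bullet> v i) *\<^sub>R q i"

definition is_S2_solution :: "nat \<Rightarrow> (nat \<Rightarrow> real) \<Rightarrow> (nat \<Rightarrow> real \<Rightarrow> real^3) \<Rightarrow> bool" where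
  "is_S2_solution n m q \<longleftrightarrow>
     (let vel = (\<lambda>i t. vector_derivative (q i) (at t));
          acc = (\<lambda>i t. vector_derivative (vel i) (at t)) in
      (\<forall>i<n. \<forall>t. (q i has_vector_derivative vel i t) (at t)
                 \<and> (vel i has_vector_derivative acc i t) (at t)) \<and>
      (\<forall>t. \<forall>i<n. \<forall>j<n. i \<noteq> j \<longrightarrow> (q i t \<bullet> q j t)\<^sup>2 \<noteq> 1) \<and>
      (\<forall>t. \<forall>i<n. q i t \<bullet> q i t = 1 \<and> q i t \<bullet> vel i t = 0 \<and>
              acc i t = S2_accel n m (\<lambda>k. q k t) (\<lambda>k. vel k t) i))"

text \<open>The elliptic relative equilibrium of the paper (bodies 1,2,3 are indices 0,1,2).\<close>
definition ere3 :: "real \<Rightarrow> real \<Rightarrow> nat \<Rightarrow> real \<Rightarrow> real^3" where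
  "ere3 z \<omega> i t =
     (let r = sqrt (1 - z\<^sup>2) in
      if i = 0 then vector [0, 0, 1]
      else if i = 1 then vector [r * cos (\<omega> * t), r * sin (\<omega> * t), z]
      else vector [- r * cos (\<omega> * t), - r * sin (\<omega> * t), z])"

end

theory Submission
  imports Defs
begin

lemma vec3_decomp: "(vector [a,b,c] :: real^3) = a *\<^sub>R vector[1,0,0] + b *\<^sub>R vector[0,1,0] + c *\<^sub>R vector[0,0,1]"
  by (simp add: vec_eq_iff forall_3)

lemma deriv3:
  assumes "(f has_real_derivative f') (at t)" "(g has_real_derivative g') (at t)" "(h has_real_derivative h') (at t)"
  shows "((\<lambda>t. vector [f t, g t, h t] :: real^3) has_vector_derivative vector [f', g', h']) (at t)"
proof -
  have "((\<lambda>t. f t *\<^sub>R (vector[1,0,0]::real^3) + g t *\<^sub>R vector[0,1,0] + h t *\<^sub>R vector[0,0,1]) has_vector_derivative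
     (f t *\<^sub>R 0 + f' *\<^sub>R vector[1,0,0] + (g t *\<^sub>R 0 + g' *\<^sub>R vector[0,1,0]) + (h t *\<^sub>R 0 + h' *\<^sub>R vector[0,0,1]))) (at t)"
    by (intro has_vector_derivative_add has_vector_derivative_scaleR assms has_vector_derivative_const)
  moreover have "(\<lambda>t. f t *\<^sub>R (vector[1,0,0]::real^3) + g t *\<^sub>R vector[0,1,0] + h t *\<^sub>R vector[0,0,1]) = (\<lambda>t. vector [f t, g t, h t])"
    by (rule ext) (simp add: vec_eq_iff forall_3)
  moreover have "(f t *\<^sub>R 0 + f' *\<^sub>R vector[1,0,0] + (g t *\<^sub>R 0 + g' *\<^sub>R vector[0,1,0]) + (h t *\<^sub>R 0 + h' *\<^sub>R vector[0,0,1])) = (vector [f', g', h'] :: real^3)"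
    by (simp add: vec_eq_iff forall_3)
  ultimately show ?thesis by simp
qed

lemma inner3: "(vector [a,b,c] :: real^3) \<bullet> vector [d,e,f] = a*d+b*e+c*f"
  by (simp add: inner_vec_def sum_3)

lemma powr32: assumes "(x::real) \<ge> 0" shows "x powr (3/2) = x * sqrt x"
proof (cases "x = 0")
  case False
  with assms have "x > 0" by simp
  have "x powr (3/2) = x powr (1 + 1/2)" by simp
  also have "\<dots> = x powr 1 * x powr (1/2)" by (rule powr_add)
  also have "\<dots> = x * sqrt x" using \<open>x>0\<close> by (simp add: powr_half_sqrt)
  finally show ?thesis .
qed simp

definition V3 :: "real \<Rightarrow> real \<Rightarrow> nat \<Rightarrow> real \<Rightarrow> real^3" where
  "V3 z w i t = (let r = sqrt (1 - z\<^sup>2) in if i = 0 then 0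
     else if i = 1 then vector [- r * w * sin (w*t), r * w * cos (w*t), 0]
     else vector [r * w * sin (w*t), - r * w * cos (w*t), 0])"

definition A3 :: "real \<Rightarrow> real \<Rightarrow> nat \<Rightarrow> real \<Rightarrow> real^3" where
  "A3 z w i t = (let r = sqrt (1 - z\<^sup>2) in if i = 0 then 0
     else if i = 1 then vector [- r * w\<^sup>2 * cos (w*t), - r * w\<^sup>2 * sin (w*t), 0]
     else vector [r * w\<^sup>2 * cos (w*t), r * w\<^sup>2 * sin (w*t), 0])"

lemma ere_deriv: "(ere3 z w i has_vector_derivative V3 z w i t) (at t)"
proof -
  define r where "r = sqrt (1 - z\<^sup>2)"
  consider "i = 0" | "i = 1" | "i \<noteq> 0 \<and> i \<noteq> 1" by blast
  then show ?thesis
  proof cases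
    case 1
    have e: "ere3 z w i = (\<lambda>t. vector [0,0,1])" using 1 by (simp add: ere3_def Let_def fun_eq_iff)
    show ?thesis unfolding e using 1 by (simp add: V3_def Let_def)
  next
    case 2
    have e: "ere3 z w i = (\<lambda>t. vector [r * cos (w*t), r * sin (w*t), z])"
      using 2 by (simp add: ere3_def Let_def r_def fun_eq_iff)
    show ?thesis unfolding e using 2
      by (simp add: V3_def Let_def r_def[symmetric]) (intro deriv3; auto intro!: derivative_eq_intros)
  next
    case 3
    have e: "ere3 z w i = (\<lambda>t. vector [- r * cos (w*t), - r * sin (w*t), z])"
      using 3 by (simp add: ere3_def Let_def r_def fun_eq_iff)
    show ?thesis unfolding e using 3
      by (simp add: V3_def Let_def r_def[symmetric]) (intro deriv3; auto intro!: derivative_eq_intros)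
  qed
qed

lemma V_deriv: "(V3 z w i has_vector_derivative A3 z w i t) (at t)"
proof -
  define r where "r = sqrt (1 - z\<^sup>2)"
  consider "i = 0" | "i = 1" | "i \<noteq> 0 \<and> i \<noteq> 1" by blast
  then show ?thesis
  proof cases
    case 1
    have e: "V3 z w i = (\<lambda>t. 0)" using 1 by (simp add: V3_def Let_def fun_eq_iff)
    show ?thesis unfolding e using 1 by (simp add: A3_def Let_def)
  next
    case 2
    have e: "V3 z w i = (\<lambda>t. vector [- r * w * sin (w*t), r * w * cos (w*t), 0])"
      using 2 by (simp add: V3_def Let_def r_def fun_eq_iff)
    show ?thesis unfolding e using 2
      by (simp add: A3_def Let_def r_def[symmetric]) (intro deriv3; auto intro!: derivative_eq_intros simp: power2_eq_square)
  next
    case 3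
    have e: "V3 z w i = (\<lambda>t. vector [r * w * sin (w*t), - r * w * cos (w*t), 0])"
      using 3 by (simp add: V3_def Let_def r_def fun_eq_iff)
    show ?thesis unfolding e using 3
      by (simp add: A3_def Let_def r_def[symmetric]) (intro deriv3; auto intro!: derivative_eq_intros simp: power2_eq_square)
  qed
qed

lemma rcs: "(r::real) * r = r * (r * (cos x * cos x)) + r * (r * (sin x * sin x))"
proof -
  have "cos x * cos x + sin x * sin x = 1" using sin_cos_squared_add2[of x] by (simp add: power2_eq_square)
  then have "r * r * (cos x * cos x + sin x * sin x) = r * r" by simp
  then show ?thesis by (simp only: ring_distribs mult.assoc)
qed

lemma rcs2: "(r::real) * (r * (w * (w * (cos x * cos x)))) + r * (r * (w * (w * (sin x * sin x)))) = r * (r * (w * w))"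
proof -
  have cc: "cos x * cos x = 1 - sin x * sin x" using sin_cos_squared_add[of x] unfolding power2_eq_square by linarith
  show ?thesis by (simp add: cc algebra_simps)
qed

lemma minus3: "{..<3::nat} - {i} = (if i = 0 then {1,2} else if i = 1 then {0,2} else if i = 2 then {0,1} else {0,1,2})"
  by auto

context
  fixes z w t :: real
  assumes z: "z \<noteq> 0" "z\<^sup>2 < 1"
begin

lemma ips:
  "ere3 z w 0 t \<bullet> ere3 z w 1 t = z" "ere3 z w 0 t \<bullet> ere3 z w 2 t = z"
  "ere3 z w 1 t \<bullet> ere3 z w 0 t = z" "ere3 z w 2 t \<bullet> ere3 z w 0 t = z"
  "ere3 z w 1 t \<bullet> ere3 z w 2 t = 2*z\<^sup>2 - 1" "ere3 z w 2 t \<bullet> ere3 z w 1 t = 2*z\<^sup>2 - 1"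
  "i < 3 \<Longrightarrow> ere3 z w i t \<bullet> ere3 z w i t = 1"
  "i < 3 \<Longrightarrow> ere3 z w i t \<bullet> V3 z w i t = 0"
  "i < 3 \<Longrightarrow> V3 z w i t \<bullet> V3 z w i t = (if i = 0 then 0 else w\<^sup>2 * (1 - z\<^sup>2))"
proof -
  define r where "r = sqrt (1 - z\<^sup>2)"
  have r2: "r\<^sup>2 = 1 - z\<^sup>2" using z by (simp add: r_def)
  have eqr: "sqrt (1 - z\<^sup>2) = r" by (simp add: r_def)
  have sc: "(sin (w*t))\<^sup>2 + (cos (w*t))\<^sup>2 = 1" by simp
  show "ere3 z w 0 t \<bullet> ere3 z w 1 t = z" "ere3 z w 0 t \<bullet> ere3 z w 2 t = z"
  "ere3 z w 1 t \<bullet> ere3 z w 0 t = z" "ere3 z w 2 t \<bullet> ere3 z w 0 t = z"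
    unfolding ere3_def Let_def eqr by (simp_all add: inner3)
  have "ere3 z w 1 t \<bullet> ere3 z w 2 t = - r\<^sup>2 * ((sin (w*t))\<^sup>2 + (cos (w*t))\<^sup>2) + z\<^sup>2"
    unfolding ere3_def Let_def eqr by (simp add: inner3 algebra_simps power2_eq_square) (metis rcs)
  then show "ere3 z w 1 t \<bullet> ere3 z w 2 t = 2*z\<^sup>2 - 1" "ere3 z w 2 t \<bullet> ere3 z w 1 t = 2*z\<^sup>2 - 1"
    by (simp_all only: r2 sc inner_commute) simp_all
  show "i < 3 \<Longrightarrow> ere3 z w i t \<bullet> ere3 z w i t = 1"
  proof -
    assume "i < 3"
    have "ere3 z w i t \<bullet> ere3 z w i t = (if i = 0 then 1 else r\<^sup>2 * ((sin (w*t))\<^sup>2 + (cos (w*t))\<^sup>2) + z\<^sup>2)"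
      unfolding ere3_def Let_def eqr by (simp add: inner3 algebra_simps power2_eq_square) (use rcs[of r "t*w"] in auto)
    then show ?thesis by (simp only: r2 sc) simp
  qed
  show "i < 3 \<Longrightarrow> ere3 z w i t \<bullet> V3 z w i t = 0"
    unfolding ere3_def Let_def V3_def Let_def eqr by (simp add: inner3 algebra_simps)
  show "i < 3 \<Longrightarrow> V3 z w i t \<bullet> V3 z w i t = (if i = 0 then 0 else w\<^sup>2 * (1 - z\<^sup>2))"
  proof -
    have "V3 z w i t \<bullet> V3 z w i t = (if i = 0 then 0 else w\<^sup>2 * r\<^sup>2 * ((sin (w*t))\<^sup>2 + (cos (w*t))\<^sup>2))"
      unfolding V3_def Let_def eqr by (simp add: inner3 algebra_simps power2_eq_square rcs2)
    then show ?thesis by (simp only: r2 sc) simp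
  qed
qed

end

lemma sol:
  assumes z: "z \<noteq> 0" "z\<^sup>2 < 1"
    and W: "w\<^sup>2 = m * ((4*z + 1/\<bar>z\<bar>) / (4 * z\<^sup>2 * (1 - z\<^sup>2) powr (3/2)))"
  shows "is_S2_solution 3 (\<lambda>_. m) (ere3 z w)"
proof -
  define r where "r = sqrt (1 - z\<^sup>2)"
  have r2: "r\<^sup>2 = 1 - z\<^sup>2" using z by (simp add: r_def)
  have rpos: "r > 0" using z by (simp add: r_def)
  have eqr: "sqrt (1 - z\<^sup>2) = r" by (simp add: r_def)
  have p1: "(1 - z\<^sup>2) powr (3/2) = r^3"
    using z by (simp add: powr32 r_def power3_eq_cube)
  have p2: "(1 - (2*z\<^sup>2 - 1)\<^sup>2) powr (3/2) = 8 * \<bar>z\<bar>^3 * r^3"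
  proof -
    have "(2*\<bar>z\<bar>*r)\<^sup>2 = 4 * z\<^sup>2 * r\<^sup>2" by (simp add: power_mult_distrib)
    also have "\<dots> = 4 * z\<^sup>2 * (1 - z\<^sup>2)" by (simp add: r2)
    also have "\<dots> = 1 - (2*z\<^sup>2 - 1)\<^sup>2" by (simp add: power2_eq_square algebra_simps)
    finally have e: "1 - (2*z\<^sup>2 - 1)\<^sup>2 = (2*\<bar>z\<bar>*r)\<^sup>2" by simp
    have "(2*\<bar>z\<bar>*r)\<^sup>2 powr (3/2) = (2*\<bar>z\<bar>*r)\<^sup>2 * (2*\<bar>z\<bar>*r)"
      using rpos by (simp add: powr32)
    then show ?thesis unfolding e by (simp add: power2_eq_square power3_eq_cube)
  qed
  have vel: "(\<lambda>i t. vector_derivative (ere3 z w i) (at t)) = V3 z w"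
    by (intro ext vector_derivative_at ere_deriv)
  have acc: "(\<lambda>i t. vector_derivative (V3 z w i) (at t)) = A3 z w"
    by (intro ext vector_derivative_at V_deriv)
  have ns: "(2*z\<^sup>2 - 1)\<^sup>2 \<noteq> 1"
  proof
    assume "(2*z\<^sup>2 - 1)\<^sup>2 = 1"
    then have "4*z\<^sup>2 * (z\<^sup>2 - 1) = 0" by (simp add: algebra_simps power2_eq_square)
    with z show False by simp
  qed
  have z1: "z\<^sup>2 \<noteq> 1" using z by simp
  have D: "\<forall>i<3. \<forall>t. (ere3 z w i has_vector_derivative V3 z w i t) (at t) \<and> (V3 z w i has_vector_derivative A3 z w i t) (at t)"
    using ere_deriv V_deriv by blast
  have N: "\<forall>t. \<forall>i<3. \<forall>j<3. i \<noteq> j \<longrightarrow> (ere3 z w i t \<bullet> ere3 z w j t)\<^sup>2 \<noteq> 1"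
  proof (intro allI impI)
    fix t i j assume "i < (3::nat)" "j < (3::nat)" "i \<noteq> j"
    then have "(i = 0 \<or> i = 1 \<or> i = 2) \<and> (j = 0 \<or> j = 1 \<or> j = 2)" by auto
    then show "(ere3 z w i t \<bullet> ere3 z w j t)\<^sup>2 \<noteq> 1"
      using \<open>i \<noteq> j\<close> ips[OF z] ns z1 by auto
  qed
  define a where "a = m / r^3"
  define b where "b = m / (8 * \<bar>z\<bar>^3 * r^3)"
  have key: "w\<^sup>2 * z = a + 2 * b * z"
  proof (cases "z > 0")
    case True
    then show ?thesis using W rpos unfolding p1 a_def b_def by (simp add: field_simps power2_eq_square power3_eq_cube)
  next
    case False
    then have "z < 0" using z by simp
    then show ?thesis using W rpos unfolding p1 a_def b_def by (simp add: field_simps power2_eq_square power3_eq_cube)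
  qed
  have acc0: "A3 z w 0 t = S2_accel 3 (\<lambda>_. m) (\<lambda>k. ere3 z w k t) (\<lambda>k. V3 z w k t) 0" for t
    apply (simp add: S2_accel_def minus3 ips[OF z] ips[OF z, simplified] p1 p2)
    apply (simp only: a_def[symmetric] b_def[symmetric])
    apply (simp add: ere3_def A3_def Let_def eqr vec_eq_iff forall_3)
    apply ((intro conjI; use key in algebra)?)
    done
  have acc1: "A3 z w 1 t = S2_accel 3 (\<lambda>_. m) (\<lambda>k. ere3 z w k t) (\<lambda>k. V3 z w k t) 1" for t
    apply (simp add: S2_accel_def minus3 ips[OF z] ips[OF z, simplified] p1 p2)
    apply (simp only: a_def[symmetric] b_def[symmetric])
    apply (simp add: ere3_def A3_def Let_def eqr vec_eq_iff forall_3)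
    apply ((intro conjI; use key in algebra)?)
    done
  have acc2: "A3 z w 2 t = S2_accel 3 (\<lambda>_. m) (\<lambda>k. ere3 z w k t) (\<lambda>k. V3 z w k t) 2" for t
    apply (simp add: S2_accel_def minus3 ips[OF z] ips[OF z, simplified] p1 p2)
    apply (simp only: a_def[symmetric] b_def[symmetric])
    apply (simp add: ere3_def A3_def Let_def eqr vec_eq_iff forall_3)
    apply ((intro conjI; use key in algebra)?)
    done
  have E: "\<forall>t. \<forall>i<3. ere3 z w i t \<bullet> ere3 z w i t = 1 \<and> ere3 z w i t \<bullet> V3 z w i t = 0 \<and>
      A3 z w i t = S2_accel 3 (\<lambda>_. m) (\<lambda>k. ere3 z w k t) (\<lambda>k. V3 z w k t) i"
  proof (intro allI impI conjI)
    fix t i assume i3: "i < (3::nat)"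
    show "ere3 z w i t \<bullet> ere3 z w i t = 1" using ips[OF z] i3 by simp
    show "ere3 z w i t \<bullet> V3 z w i t = 0" using ips[OF z] i3 by simp
    have "i = 0 \<or> i = 1 \<or> i = 2" using i3 by auto
    then show "A3 z w i t = S2_accel 3 (\<lambda>_. m) (\<lambda>k. ere3 z w k t) (\<lambda>k. V3 z w k t) i"
      using acc0 acc1 acc2 by blast
  qed
  show ?thesis unfolding is_S2_solution_def Let_def vel vector_derivative_at[OF V_deriv] using D N E by blast
qed


theorem mainTheorem11:
  fixes m z :: real
  assumes "m > 0"
    and "z \<in> {-1/2<..<0} \<union> {0<..<1}"
  shows "(\<exists>\<omega>>0. (4*z + 1/\<bar>z\<bar>) / (4 * z\<^sup>2 * (1 - z\<^sup>2) powr (3/2)) = \<omega>\<^sup>2 / m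
               \<and> is_S2_solution 3 (\<lambda>_. m) (ere3 z \<omega>))
       \<and> (\<exists>\<omega><0. (4*z + 1/\<bar>z\<bar>) / (4 * z\<^sup>2 * (1 - z\<^sup>2) powr (3/2)) = \<omega>\<^sup>2 / m
               \<and> is_S2_solution 3 (\<lambda>_. m) (ere3 z \<omega>))"
proof -
  have zr: "(-1/2 < z \<and> z < 0) \<or> (0 < z \<and> z < 1)" using assms(2) by auto
  have z0: "z \<noteq> 0" using zr by auto
  have zabs: "\<bar>z\<bar> < 1" using zr by auto
  have z2: "z\<^sup>2 < 1"
  proof -
    have "z\<^sup>2 = \<bar>z\<bar> * \<bar>z\<bar>" by (simp add: power2_eq_square)
    also have "\<dots> < 1 * 1" using zabs z0 by (intro mult_strict_mono) auto
    finally show ?thesis by simp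
  qed
  define K where "K = (4*z + 1/\<bar>z\<bar>) / (4 * z\<^sup>2 * (1 - z\<^sup>2) powr (3/2))"
  have num: "4*z + 1/\<bar>z\<bar> > 0"
    using zr
  proof (elim disjE conjE)
    assume a: "-1/2 < z" "z < 0"
    then have "\<bar>z\<bar> < 1/2" "\<bar>z\<bar> > 0" by auto
    then have "1/\<bar>z\<bar> > 2" by (simp add: field_simps)
    with a show ?thesis by linarith
  next
    assume "0 < z" "z < 1" then show ?thesis by (simp add: add_pos_pos)
  qed
  have den: "4 * z\<^sup>2 * (1 - z\<^sup>2) powr (3/2) > 0" using z0 z2 by simp
  have Kpos: "K > 0" unfolding K_def using num den by simp
  define w where "w = sqrt (m * K)"
  have mK: "m * K > 0" using Kpos assms(1) by simp
  have wpos: "w > 0" unfolding w_def using mK by simp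
  have w2: "w\<^sup>2 = m * K" unfolding w_def using mK by simp
  have Keq: "K = w\<^sup>2 / m" using w2 assms(1) by simp
  have w2': "(-w)\<^sup>2 = m * K" using w2 by simp
  show ?thesis
  proof (intro conjI)
    show "\<exists>\<omega>>0. (4*z + 1/\<bar>z\<bar>) / (4 * z\<^sup>2 * (1 - z\<^sup>2) powr (3/2)) = \<omega>\<^sup>2 / m
               \<and> is_S2_solution 3 (\<lambda>_. m) (ere3 z \<omega>)"
      using wpos Keq sol[OF z0 z2, of w m] w2 unfolding K_def by auto
    show "\<exists>\<omega><0. (4*z + 1/\<bar>z\<bar>) / (4 * z\<^sup>2 * (1 - z\<^sup>2) powr (3/2)) = \<omega>\<^sup>2 / m
               \<and> is_S2_solution 3 (\<lambda>_. m) (ere3 z \<omega>)"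
      using wpos Keq sol[OF z0 z2, of "-w" m] w2' unfolding K_def
      by (intro exI[of _ "-w"]) auto
  qed
qed

end
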